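(* Let $V=x\partial_x+y\partial_y$ on $\mathrm{SL}(2,\mathbb R)$. (1) The only $\mathcal N$-invariant $V$-translators are the surfaces $\Sigma_{\theta_0}$ and the surfaces parametrized by $(s,t)\mapsto (t,y(s),\theta(s))$ with generating curve $\alpha(s)=(y(s),\theta(s))=\big(c(1+\cos(\sqrt2(s-s_0))),\,s\big)$, where $c>0$, $s_0\in\mathbb R$ (and $\frac{s-s_0}{\sqrt2}\in(-\frac\pi2,\frac\pi2)$). (2) The only $\mathcal A$-invariant $V$-translators are the surfaces $\Sigma_{\theta_0}$ and the surface $\Sigma_{x_0}$ with $x_0=0$. (3) Let $\Sigma$ be a rotational surface whose generating curve $\alpha(s)=(x(s),y(s))$ satisfies $x'=2y\cos\varphi$, $y'=2y\sin\varphi$. If $\Sigma$ is a $V$-translator, then $$\varphi'=-\frac{y\cos\varphi+x\sin\varphi}{y}.$$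
   Context: $\mathrm{SL}(2,\mathbb R)$ is given global coordinates $(x,y,\theta)\in\mathbb R\times(0,\infty)\times\mathbb R$ via $(x,y,\theta)\mapsto \begin{pmatrix}1&x\\0&1\end{pmatrix}\begin{pmatrix}\sqrt y&0\\0&1/\sqrt y\end{pmatrix}\begin{pmatrix}\cos\theta&\sin\theta\\-\sin\theta&\cos\theta\end{pmatrix}$, with the metric $\langle\,,\rangle=\frac{dx^2+dy^2}{4y^2}+\left(d\theta+\frac{dx}{2y}\right)^2$. Orthonormal frame: $e_1=2y\partial_x-\partial_\theta$, $e_2=2y\partial_y$, $e_3=\partial_\theta$; the Killing field $V=x\partial_x+y\partial_y$ equals $\frac{1}{2y}(xe_1+ye_2+xe_3)$. A surface with unit normal $N$ and mean curvature $H$ (average of principal curvatures w.r.t. $N$) is a $V$-translator if $H=\langle N,V\rangle$. $\mathcal N$-invariant surfaces: parametrized as $(s,t)\mapsto(t,y(s),\theta(s))$; $N=\frac{y'}{\sqrt2\Phi}(e_1-e_3)+\frac{\sqrt2 y\theta'}{\Phi}e_2$, $H=\frac{\sqrt2 y^2}{\Phi^3}(\theta'y''-y'\theta''+2y\theta'^3)$, $\Phi=\sqrt{y'^2+2y^2\theta'^2}$. $\mathcal A$-invariant surfaces: parametrized as $(s,t)\mapsto(x(s),t,\theta(s))$, $t>0$; $N=\frac1\Phi(-(x'+2t\theta')e_1+x'e_3)$, $H=\frac{2t^2}{\Phi^3}(x'\theta''-\theta'x'')$, $\Phi=\sqrt{(x'+2t\theta')^2+x'^2}$. Rotational surfaces: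 parametrized as $(s,t)\mapsto(x(s),y(s),t)$; when $x'=2y\cos\varphi$, $y'=2y\sin\varphi$, $N=-\sin\varphi\,e_1+\cos\varphi\,e_2$ and $H=\frac{\varphi'}{2}+\cos\varphi$. $\Sigma_{x_0}=\{x=x_0\}$, $\Sigma_{\theta_0}=\{\theta=\theta_0\}$ for constants $x_0,\theta_0$. *)

theory Defs
  imports "HOL-Analysis.Analysis"
begin

text \<open>Tangent vectors of SL(2,R) are represented by their coefficients
  (a1,a2,a3) with respect to the orthonormal frame e1 = 2y d_x - d_theta,
  e2 = 2y d_y, e3 = d_theta.  Since the frame is orthonormal, the metric is
  the Euclidean dot product of coefficient triples.\<close>

definition frame_inner :: "real \<times> real \<times> real \<Rightarrow> real \<times> real \<times> real \<Rightarrow> real" where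
  "frame_inner u v = (case u of (a1, a2, a3) \<Rightarrow> case v of (b1, b2, b3) \<Rightarrow> a1*b1 + a2*b2 + a3*b3)"

text \<open>The Killing field V = x d_x + y d_y = (1/(2y)) (x e1 + y e2 + x e3) at the
  point with coordinates (x, y, theta) (it does not depend on theta).\<close>

definition V_frame :: "real \<Rightarrow> real \<Rightarrow> real \<times> real \<times> real" where
  "V_frame x y = (x / (2*y), y / (2*y), x / (2*y))"

definition C2_on :: "real set \<Rightarrow> (real \<Rightarrow> real) \<Rightarrow> bool" where
  "C2_on I f \<longleftrightarrow> (\<forall>s\<in>I. f differentiable (at s) \<and> deriv f differentiable (at s))
                 \<and> continuous_on I (deriv (deriv f))"

definition open_interval :: "real set \<Rightarrow> bool" where
  "open_interval I \<longleftrightarrow> open I \<and> is_interval I \<and> I \<noteq> {}"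

section \<open>N-invariant surfaces (s,t) |-> (t, y(s), theta(s))\<close>

definition Phi_N :: "real \<Rightarrow> real \<Rightarrow> real \<Rightarrow> real" where
  "Phi_N y y' th' = sqrt (y'^2 + 2 * y^2 * th'^2)"

definition N_N :: "real \<Rightarrow> real \<Rightarrow> real \<Rightarrow> real \<times> real \<times> real" where
  "N_N y y' th' =
     (let P = Phi_N y y' th' in (y' / (sqrt 2 * P), sqrt 2 * y * th' / P, - y' / (sqrt 2 * P)))"

definition H_N :: "real \<Rightarrow> real \<Rightarrow> real \<Rightarrow> real \<Rightarrow> real \<Rightarrow> real" where
  "H_N y y' y'' th' th'' =
     sqrt 2 * y^2 / (Phi_N y y' th')^3 * (th' * y'' - y' * th'' + 2 * y * th'^3)"

definition N_inv_curve :: "real set \<Rightarrow> (real \<Rightarrow> real) \<Rightarrow> (real \<Rightarrow> real) \<Rightarrow> bool" where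
  "N_inv_curve I y th \<longleftrightarrow> open_interval I \<and> C2_on I y \<and> C2_on I th \<and>
     (\<forall>s\<in>I. y s > 0 \<and> Phi_N (y s) (deriv y s) (deriv th s) > 0)"

definition N_inv_V_translator :: "real set \<Rightarrow> (real \<Rightarrow> real) \<Rightarrow> (real \<Rightarrow> real) \<Rightarrow> bool" where
  "N_inv_V_translator I y th \<longleftrightarrow>
     (\<forall>s\<in>I. \<forall>t::real.
        H_N (y s) (deriv y s) (deriv (deriv y) s) (deriv th s) (deriv (deriv th) s)
        = frame_inner (N_N (y s) (deriv y s) (deriv th s)) (V_frame t (y s)))"

section \<open>A-invariant surfaces (s,t) |-> (x(s), t, theta(s)), t > 0\<close>

definition Phi_A :: "real \<Rightarrow> real \<Rightarrow> real \<Rightarrow> real" where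
  "Phi_A t x' th' = sqrt ((x' + 2 * t * th')^2 + x'^2)"

definition N_A :: "real \<Rightarrow> real \<Rightarrow> real \<Rightarrow> real \<times> real \<times> real" where
  "N_A t x' th' = (let P = Phi_A t x' th' in (- (x' + 2 * t * th') / P, 0, x' / P))"

definition H_A :: "real \<Rightarrow> real \<Rightarrow> real \<Rightarrow> real \<Rightarrow> real \<Rightarrow> real" where
  "H_A t x' x'' th' th'' = 2 * t^2 / (Phi_A t x' th')^3 * (x' * th'' - th' * x'')"

definition A_inv_curve :: "real set \<Rightarrow> (real \<Rightarrow> real) \<Rightarrow> (real \<Rightarrow> real) \<Rightarrow> bool" where
  "A_inv_curve I x th \<longleftrightarrow> open_interval I \<and> C2_on I x \<and> C2_on I th \<and>
     (\<forall>s\<in>I. \<forall>t>0. Phi_A t (deriv x s) (deriv th s) > 0)"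

definition A_inv_V_translator :: "real set \<Rightarrow> (real \<Rightarrow> real) \<Rightarrow> (real \<Rightarrow> real) \<Rightarrow> bool" where
  "A_inv_V_translator I x th \<longleftrightarrow>
     (\<forall>s\<in>I. \<forall>t>0.
        H_A t (deriv x s) (deriv (deriv x) s) (deriv th s) (deriv (deriv th) s)
        = frame_inner (N_A t (deriv x s) (deriv th s)) (V_frame (x s) t))"

section \<open>Rotational surfaces (s,t) |-> (x(s), y(s), t) with x' = 2y cos phi, y' = 2y sin phi\<close>

definition N_rot :: "real \<Rightarrow> real \<times> real \<times> real" where
  "N_rot phi = (- sin phi, cos phi, 0)"

definition H_rot :: "real \<Rightarrow> real \<Rightarrow> real" where
  "H_rot phi phi' = phi' / 2 + cos phi"

definition rot_V_translator :: "real set \<Rightarrow> (real \<Rightarrow> real) \<Rightarrow> (real \<Rightarrow> real) \<Rightarrow> (real \<Rightarrow> real) \<Rightarrow> bool" where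
  "rot_V_translator I x y phi \<longleftrightarrow>
     (\<forall>s\<in>I. \<forall>t::real. H_rot (phi s) (deriv phi s) = frame_inner (N_rot (phi s)) (V_frame (x s) (y s)))"

end

theory Submission
  imports Defs
begin


lemma N_eq:
  fixes y y1 y2 t1 t2 t :: real
  assumes y: "y > 0" and P: "Phi_N y y1 t1 > 0"
  shows "(H_N y y1 y2 t1 t2 = frame_inner (N_N y y1 t1) (V_frame t y)) \<longleftrightarrow>
          2*y*t1*y2 - 2*y*y1*t2 + 2*y^2*t1^3 - t1*y1^2 = 0"
proof -
  define P where "P = Phi_N y y1 t1"
  have P0: "P > 0" using P P_def by simp
  have P2: "P^2 = y1^2 + 2*y^2*t1^2" unfolding P_def Phi_N_def
    by (simp add: add_nonneg_nonneg)
  have s2: "sqrt 2 * sqrt 2 = (2::real)" "\<And>z. sqrt 2 * (sqrt 2 * z) = (2::real) * z" by (simp_all add: mult.assoc[symmetric])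
  have fi: "frame_inner (N_N y y1 t1) (V_frame t y) = y * t1 / (sqrt 2 * P)"
    unfolding frame_inner_def N_N_def V_frame_def Let_def P_def[symmetric]
    using y P0 by (simp add: field_simps s2)
  have H: "H_N y y1 y2 t1 t2 = sqrt 2 * y^2 / P^3 * (t1 * y2 - y1 * t2 + 2 * y * t1^3)"
    unfolding H_N_def P_def by simp
  define K0 where "K0 = t1 * y2 - y1 * t2 + 2 * y * t1^3"
  have nz: "sqrt 2 * P^3 \<noteq> 0" using P0 by simp
  have e1: "sqrt 2 * y^2 / P^3 * K0 * (sqrt 2 * P^3) = y * (2 * y * K0)"
    using P0 by (simp add: field_simps s2 power2_eq_square)
  have e2: "y * t1 / (sqrt 2 * P) * (sqrt 2 * P^3) = y * (t1 * P^2)"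
    using P0 by (simp add: field_simps s2 power2_eq_square power3_eq_cube)
  have "(sqrt 2 * y^2 / P^3 * K0 = y * t1 / (sqrt 2 * P))
      \<longleftrightarrow> (sqrt 2 * y^2 / P^3 * K0 * (sqrt 2 * P^3) = y * t1 / (sqrt 2 * P) * (sqrt 2 * P^3))"
    using nz by (metis mult_cancel_right)
  also have "\<dots> \<longleftrightarrow> (2 * y * K0 = t1 * P^2)" unfolding e1 e2 using y by simp
  finally have "(sqrt 2 * y^2 / P^3 * (t1 * y2 - y1 * t2 + 2 * y * t1^3) = y * t1 / (sqrt 2 * P))
      \<longleftrightarrow> (2 * y * (t1 * y2 - y1 * t2 + 2 * y * t1^3) = t1 * P^2)" unfolding K0_def .
  also have "\<dots> \<longleftrightarrow> 2*y*t1*y2 - 2*y*y1*t2 + 2*y^2*t1^3 - t1*y1^2 = 0"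
    unfolding P2 by (auto simp: algebra_simps power2_eq_square power3_eq_cube)
  finally show ?thesis using fi H by simp
qed

lemma A_eq:
  fixes x x1 x2 t1 t2 t :: real
  assumes t: "t > 0" and P: "Phi_A t x1 t1 > 0"
  shows "(H_A t x1 x2 t1 t2 = frame_inner (N_A t x1 t1) (V_frame x t)) \<longleftrightarrow>
          2*t^2*(x1*t2 - t1*x2) = - t1 * x * ((x1+2*t*t1)^2 + x1^2)"
proof -
  define P where "P = Phi_A t x1 t1"
  have P0: "P > 0" using P P_def by simp
  have P2: "P^2 = (x1+2*t*t1)^2 + x1^2" unfolding P_def Phi_A_def
    by (simp add: add_nonneg_nonneg)
  have fi: "frame_inner (N_A t x1 t1) (V_frame x t) = - t1 * x / P"
    unfolding frame_inner_def N_A_def V_frame_def Let_def P_def[symmetric]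
    using t P0 by (simp add: field_simps)
  have H: "H_A t x1 x2 t1 t2 = 2 * t^2 / P^3 * (x1 * t2 - t1 * x2)"
    unfolding H_A_def P_def by simp
  define K0 where "K0 = x1 * t2 - t1 * x2"
  have nz: "P^3 \<noteq> 0" using P0 by simp
  have e1: "2 * t^2 / P^3 * K0 * P^3 = 2*t^2*K0"
    using P0 by (simp add: field_simps)
  have e2: "- t1 * x / P * P^3 = - t1 * x * P^2"
    using P0 by (simp add: field_simps power2_eq_square power3_eq_cube)
  have "(2 * t^2 / P^3 * K0 = - t1 * x / P)
      \<longleftrightarrow> (2 * t^2 / P^3 * K0 * P^3 = - t1 * x / P * P^3)"
    using nz by (metis mult_cancel_right)
  also have "\<dots> \<longleftrightarrow> (2*t^2*K0 = - t1 * x * P^2)" unfolding e1 e2 by simp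
  finally have "(2 * t^2 / P^3 * (x1 * t2 - t1 * x2) = - t1 * x / P)
      \<longleftrightarrow> (2*t^2*(x1*t2 - t1*x2) = - t1 * x * P^2)" unfolding K0_def .
  then show ?thesis using fi H P2 by simp
qed

lemma openI_ev: "(\<And>p. p \<in> S \<Longrightarrow> eventually (\<lambda>s. s \<in> S) (nhds p)) \<Longrightarrow> open S"
  by (metis eventually_nhds open_subopen subsetI)

lemma cont_ev_ne:
  fixes f :: "real \<Rightarrow> real"
  shows "isCont f p \<Longrightarrow> f p \<noteq> c \<Longrightarrow> eventually (\<lambda>s. f s \<noteq> c) (nhds p)"
  unfolding eventually_nhds_conv_at isCont_def using tendsto_imp_eventually_ne by auto

lemma C2_D:
  assumes "C2_on I f" "s \<in> I"
  shows "(f has_real_derivative deriv f s) (at s)"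
    "(deriv f has_real_derivative deriv (deriv f) s) (at s)"
  using assms unfolding C2_on_def by (auto simp: DERIV_deriv_iff_real_differentiable)

lemma const_on:
  assumes "open_interval I" "\<And>s. s \<in> I \<Longrightarrow> (f has_real_derivative 0) (at s)"
  shows "\<exists>c. \<forall>s\<in>I. f s = c"
proof -
  have "convex I" using assms(1) unfolding open_interval_def by (simp add: is_interval_convex)
  then show ?thesis using assms(2)
    by (intro has_field_derivative_zero_constant) (auto intro: has_field_derivative_at_within)
qed

lemma deriv_eqI:
  assumes "open I" "s \<in> I" "\<And>u. u \<in> I \<Longrightarrow> f u = g u" "(g has_real_derivative D) (at s)"
  shows "deriv f s = D"
proof -
  have "(f has_real_derivative D) (at s)"
    using has_field_derivative_transform_within_open[OF assms(4) assms(1) assms(2), of f] assms(3) by simp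
  then show ?thesis by (rule DERIV_imp_deriv)
qed

lemma deriv_ev0:
  assumes "eventually (\<lambda>u. f u = 0) (nhds s)"
  shows "(f has_real_derivative 0) (at s)"
proof -
  obtain S where S: "open S" "s \<in> S" "\<forall>u\<in>S. f u = 0" using assms by (auto simp: eventually_nhds)
  have "((\<lambda>_. 0::real) has_real_derivative 0) (at s)" by simp
  then show ?thesis using has_field_derivative_transform_within_open[OF _ S(1) S(2), of "\<lambda>_. 0" 0 f] S(3) by simp
qed

lemma part3:
  assumes "\<forall>s\<in>I. y s > 0" "rot_V_translator I x y phi" "s \<in> I"
  shows "deriv phi s = - (y s * cos (phi s) + x s * sin (phi s)) / y s"
proof -
  have y: "y s > 0" using assms by auto
  have "H_rot (phi s) (deriv phi s) = frame_inner (N_rot (phi s)) (V_frame (x s) (y s))"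
    using assms unfolding rot_V_translator_def by auto
  then have "deriv phi s / 2 + cos (phi s) = - sin (phi s) * (x s / (2 * y s)) + cos (phi s) * (y s / (2 * y s))"
    unfolding H_rot_def frame_inner_def N_rot_def V_frame_def by simp
  then show ?thesis using y by (simp add: field_simps)
qed


lemma polyA: "(2*(X1*T2 - T1*X2) + 4*T1^3*x)*t^2 + (4 * T1^2 * x * X1)*t + 2 * T1 * x * X1^2 = 2*t^2*(X1*T2 - T1*X2) + T1*x*((X1+2*t*T1)^2+X1^2)" for t X1 T1 T2 X2 x :: real
  by (simp add: power2_eq_square power3_eq_cube algebra_simps)

lemma part2:
  assumes C: "A_inv_curve I x th"
  shows "A_inv_V_translator I x th \<longleftrightarrow> ((\<exists>th0. \<forall>s\<in>I. th s = th0) \<or> (\<forall>s\<in>I. x s = 0))"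
proof -
  have oI: "open I" and cI: "connected I" and Cx: "C2_on I x" and Ct: "C2_on I th"
    and Ph: "\<And>s t. s \<in> I \<Longrightarrow> t > 0 \<Longrightarrow> Phi_A t (deriv x s) (deriv th s) > 0"
    using C unfolding A_inv_curve_def open_interval_def by (auto simp: is_interval_connected)
  have tr_iff: "A_inv_V_translator I x th \<longleftrightarrow> (\<forall>s\<in>I. \<forall>t>0.
      2*t^2*(deriv x s * deriv (deriv th) s - deriv th s * deriv (deriv x) s)
        = - deriv th s * x s * ((deriv x s + 2*t*deriv th s)^2 + deriv x s^2))"
  proof -
    have eqv: "\<And>s t. s\<in>I \<Longrightarrow> t>0 \<Longrightarrow> (H_A t (deriv x s) (deriv (deriv x) s) (deriv th s) (deriv (deriv th) s)
        = frame_inner (N_A t (deriv x s) (deriv th s)) (V_frame (x s) t)) = (2*t^2*(deriv x s * deriv (deriv th) s - deriv th s * deriv (deriv x) s)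
        = - deriv th s * x s * ((deriv x s + 2*t*deriv th s)^2 + deriv x s^2))"
      using A_eq Ph by blast
    show ?thesis unfolding A_inv_V_translator_def by (simp add: eqv)
  qed
  show ?thesis
  proof
    assume tr: "A_inv_V_translator I x th"
    define x1 where "x1 = deriv x"
    define x2 where "x2 = deriv (deriv x)"
    define t1 where "t1 = deriv th"
    define t2 where "t2 = deriv (deriv th)"
    have coef: "2*(x1 s*t2 s - t1 s*x2 s) + 4*t1 s^3*x s = 0 \<and> t1 s^2 * x s * x1 s = 0
       \<and> t1 s * x s * x1 s^2 = 0" if "s \<in> I" for s
    proof -
      define a where "a = 2*(x1 s*t2 s - t1 s*x2 s) + 4*t1 s^3*x s"
      define b where "b = 4 * t1 s^2 * x s * x1 s"
      define c where "c = 2 * t1 s * x s * x1 s^2"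
      have e: "a*t^2 + b*t + c = 0" if "t > 0" for t :: real
      proof -
        have "2*t^2*(x1 s * t2 s - t1 s * x2 s) = - t1 s * x s * ((x1 s + 2*t*t1 s)^2 + x1 s^2)"
          using tr[unfolded tr_iff] \<open>s \<in> I\<close> that unfolding x1_def x2_def t1_def t2_def by blast
        moreover have "a*t^2+b*t+c = 2*t^2*(x1 s*t2 s - t1 s*x2 s) + t1 s*x s*((x1 s+2*t*t1 s)^2+x1 s^2)"
          unfolding a_def b_def c_def by (rule polyA)
        ultimately show ?thesis by linarith
      qed
      have "a+b+c=0" "4*a+2*b+c=0" "9*a+3*b+c=0" using e[of 1] e[of 2] e[of 3] by simp_all
      then have "a = 0" "b = 0" "c = 0" by linarith+
      then show ?thesis unfolding a_def b_def c_def by auto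
    qed
    have t1c: "isCont t1 s" if "s \<in> I" for s
      using C2_D(2)[OF Ct that] unfolding t1_def by (rule DERIV_isCont)
    have xc: "isCont x s" if "s \<in> I" for s
      using C2_D(1)[OF Cx that] by (rule DERIV_isCont)
    have x1nz: "x1 s \<noteq> 0" if "s \<in> I" "t1 s = 0" for s
      using Ph[OF that(1), of 1] that(2) unfolding Phi_A_def x1_def t1_def by auto
    define U where "U = {s\<in>I. t1 s \<noteq> 0}"
    define Z where "Z = {s\<in>I. t1 s = 0}"
    have evI: "eventually (\<lambda>s. s \<in> I) (nhds p)" if "p \<in> I" for p
      using oI that eventually_nhds by blast
    have oU: "open U"
    proof (rule openI_ev)
      fix p assume "p \<in> U"
      then have "p \<in> I" "t1 p \<noteq> 0" unfolding U_def by auto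
      then have "eventually (\<lambda>s. t1 s \<noteq> 0) (nhds p)"
        using t1c[OF \<open>p \<in> I\<close>] by (intro cont_ev_ne) auto
      then show "eventually (\<lambda>s. s \<in> U) (nhds p)"
        using evI[OF \<open>p \<in> I\<close>] unfolding U_def by eventually_elim auto
    qed
    have xU: "x p = 0" if "p \<in> U" for p
    proof (rule ccontr)
      assume xp: "x p \<noteq> 0"
      have pI: "p \<in> I" "t1 p \<noteq> 0" using that unfolding U_def by auto
      have "eventually (\<lambda>s. t1 s \<noteq> 0) (nhds p)"
        using t1c[OF pI(1)] pI by (intro cont_ev_ne) auto
      moreover have "eventually (\<lambda>s. x s \<noteq> 0) (nhds p)"
        using xc[OF pI(1)] xp by (intro cont_ev_ne) auto
      ultimately have "eventually (\<lambda>s. x1 s = 0) (nhds p)"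
        using evI[OF pI(1)] proof eventually_elim
        case (elim s) then show ?case using coef[of s] by auto
      qed
      then have d0: "(x1 has_real_derivative 0) (at p)" by (rule deriv_ev0)
      have "x2 p = 0" using DERIV_unique[OF d0[unfolded x1_def] C2_D(2)[OF Cx pI(1)]] unfolding x2_def by simp
      moreover have "x1 p = 0" using \<open>eventually (\<lambda>s. x1 s = 0) (nhds p)\<close> by (simp add: eventually_nhds_conv_at)
      ultimately show False using coef[OF pI(1)] pI(2) xp by auto
    qed
    have oZ: "open Z"
    proof (rule openI_ev)
      fix p assume "p \<in> Z"
      then have pI: "p \<in> I" "t1 p = 0" unfolding Z_def by auto
      have nz: "x1 p \<noteq> 0" using x1nz[OF pI] .
      have "eventually (\<lambda>s. x s \<noteq> 0) (at p)"
      proof (cases "x p = 0")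
        case True
        have "((\<lambda>s. (x s - x p) / (s - p)) \<longlongrightarrow> x1 p) (at p)"
          using C2_D(1)[OF Cx pI(1)] unfolding x1_def has_field_derivative_iff by simp
        then have "eventually (\<lambda>s. (x s - x p) / (s - p) \<noteq> 0) (at p)"
          using nz by (rule tendsto_imp_eventually_ne)
        then show ?thesis by eventually_elim (use True in auto)
      next
        case False
        have "eventually (\<lambda>s. x s \<noteq> 0) (nhds p)"
          using xc[OF pI(1)] False by (intro cont_ev_ne) auto
        then show ?thesis by (simp add: eventually_nhds_conv_at)
      qed
      moreover have "eventually (\<lambda>s. s \<in> I) (at p)" using evI[OF pI(1)] by (simp add: eventually_nhds_conv_at)
      ultimately have "eventually (\<lambda>s. s \<in> Z) (at p)"
      proof eventually_elim
        case (elim s) then show ?case using xU[of s] unfolding U_def Z_def by auto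
      qed
      then show "eventually (\<lambda>s. s \<in> Z) (nhds p)" using \<open>p \<in> Z\<close> by (simp add: eventually_nhds_conv_at)
    qed
    have "U \<inter> I = {} \<or> Z \<inter> I = {}"
      by (rule connectedD[OF cI oU oZ]) (auto simp: U_def Z_def)
    then show "(\<exists>th0. \<forall>s\<in>I. th s = th0) \<or> (\<forall>s\<in>I. x s = 0)"
    proof
      assume "U \<inter> I = {}"
      then have "\<And>s. s \<in> I \<Longrightarrow> t1 s = 0" unfolding U_def by auto
      then have "\<And>s. s \<in> I \<Longrightarrow> (th has_real_derivative 0) (at s)"
      proof -
        fix s assume "s \<in> I" "\<And>s. s \<in> I \<Longrightarrow> t1 s = 0"
        then show "(th has_real_derivative 0) (at s)" using C2_D(1)[OF Ct \<open>s \<in> I\<close>] unfolding t1_def by simp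
      qed
      then show ?thesis using const_on C unfolding A_inv_curve_def by blast
    next
      assume "Z \<inter> I = {}"
      then have "\<And>s. s \<in> I \<Longrightarrow> s \<in> U" unfolding U_def Z_def by auto
      then show ?thesis using xU by blast
    qed
  next
    assume H: "(\<exists>th0. \<forall>s\<in>I. th s = th0) \<or> (\<forall>s\<in>I. x s = 0)"
    show "A_inv_V_translator I x th"
    proof (cases "\<exists>th0. \<forall>s\<in>I. th s = th0")
      case True
      then obtain th0 where th0: "\<forall>s\<in>I. th s = th0" by blast
      have d1: "deriv th s = 0" if "s \<in> I" for s
        by (rule deriv_eqI[OF oI that, of _ "\<lambda>_. th0"]) (use th0 in auto)
      have d2: "deriv (deriv th) s = 0" if "s \<in> I" for s
        by (rule deriv_eqI[OF oI that, of _ "\<lambda>_. 0"]) (use d1 in auto)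
      show ?thesis unfolding tr_iff using d1 d2 by simp
    next
      case False
      then have x0: "\<forall>s\<in>I. x s = 0" using H by blast
      have d1: "deriv x s = 0" if "s \<in> I" for s
        by (rule deriv_eqI[OF oI that, of _ "\<lambda>_. 0"]) (use x0 in auto)
      have d2: "deriv (deriv x) s = 0" if "s \<in> I" for s
        by (rule deriv_eqI[OF oI that, of _ "\<lambda>_. 0"]) (use d1 in auto)
      show ?thesis unfolding tr_iff using d1 d2 x0 by simp
    qed
  qed
qed



lemma K_num: "(2*t1*t2*y + t1^2*y1)*(y1^2+2*y^2*t1^2) - t1^2*y*(2*y1*y2 + 4*y*y1*t1^2 + 4*y^2*t1*t2)
   = -t1*y1*(2*y*t1*y2 - 2*y*y1*t2 + 2*y^2*t1^3 - t1*y1^2)" for t1 t2 y y1 y2 :: real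
  by (simp add: power2_eq_square power3_eq_cube algebra_simps)

lemma trig_shift:
  fixes A B p u :: real
  shows "A * cos u + B * sin u = (A * cos p + B * sin p) * cos (u - p) + (B * cos p - A * sin p) * sin (u - p)"
proof -
  have "(A * cos p + B * sin p) * cos (u - p) + (B * cos p - A * sin p) * sin (u - p)
     = A * cos u * ((sin p)^2 + (cos p)^2) + B * sin u * ((sin p)^2 + (cos p)^2)"
    by (simp add: cos_diff sin_diff algebra_simps power2_eq_square del: sin_cos_squared_add sin_cos_squared_add2 sin_cos_squared_add3)
  then show ?thesis by simp
qed

lemma trig_arctan:
  fixes A B u :: real
  assumes "A > 0"
  shows "A * cos u + B * sin u = (A / cos (arctan (B/A))) * cos (u - arctan (B/A))"
proof -
  define b where "b = arctan (B/A)"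
  have cb: "cos b > 0" unfolding b_def using arctan cos_gt_zero_pi by blast
  have tb: "sin b / cos b = B / A" unfolding b_def using arctan[of "B/A"] by (simp add: tan_def)
  have sb: "sin b = B / A * cos b" using tb cb by (simp add: field_simps)
  have "(A / cos b) * cos (u - b) = (A / cos b) * (cos u * cos b + sin u * (B / A * cos b))"
    by (simp add: cos_diff sb)
  also have "\<dots> = A * cos u + B * sin u" using cb assms by (simp add: field_simps)
  finally show ?thesis unfolding b_def by simp
qed


lemma h_alg:
  fixes g y T1 T2 Y1 Y2 :: real
  assumes g: "g > 0" and gy: "g * g = y" and T: "2*y*T1*Y2 - 2*y*Y1*T2 + 2*y^2*T1^3 - T1*Y1^2 = 0" and t: "T1 \<noteq> 0"
  shows "(Y2 * (2 * g * T1) - Y1 * (2 * (Y1 / (2 * g)) * T1 + 2 * g * T2)) / (2 * g * T1)^2 = - g * T1 / 2"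
proof -
  have "g * (Y2 * (2 * g * T1) - Y1 * (2 * (Y1 / (2 * g)) * T1 + 2 * g * T2)) = 2*y*T1*Y2 - 2*y*Y1*T2 - T1*Y1^2"
    using g unfolding gy[symmetric] by (simp add: field_simps power2_eq_square)
  also have "\<dots> = - 2*y^2*T1^3" using T by simp
  also have "\<dots> = g * (- g * T1 / 2 * (2 * g * T1)^2)"
    unfolding gy[symmetric] by (simp add: power2_eq_square power3_eq_cube algebra_simps)
  finally have "Y2 * (2 * g * T1) - Y1 * (2 * (Y1 / (2 * g)) * T1 + 2 * g * T2) = - g * T1 / 2 * (2 * g * T1)^2"
    using g by (metis (no_types) mult_left_cancel order_less_irrefl)
  then show ?thesis using g t by (simp add: field_simps)
qed

lemma part1_fwd:
  assumes C: "N_inv_curve I y th" and tr: "N_inv_V_translator I y th"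
  shows "(\<exists>th0. \<forall>s\<in>I. th s = th0) \<or>
          (\<exists>c>0. \<exists>s0. \<forall>s\<in>I. \<bar>th s - s0\<bar> < pi / sqrt 2 \<and>
                              y s = c * (1 + cos (sqrt 2 * (th s - s0))))"
proof -
  have oI: "open I" and cI: "connected I" and Cy: "C2_on I y" and Ct: "C2_on I th" and ne: "I \<noteq> {}"
    and ypos: "\<And>s. s \<in> I \<Longrightarrow> y s > 0"
    and Ph: "\<And>s. s \<in> I \<Longrightarrow> Phi_N (y s) (deriv y s) (deriv th s) > 0"
    using C unfolding N_inv_curve_def open_interval_def by (auto simp: is_interval_connected)
  define y1 where "y1 = deriv y"
  define y2 where "y2 = deriv (deriv y)"
  define t1 where "t1 = deriv th"
  define t2 where "t2 = deriv (deriv th)"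
  have Dy: "(y has_real_derivative y1 s) (at s)" if "s \<in> I" for s
    using C2_D(1)[OF Cy that] unfolding y1_def .
  have Dy1: "(y1 has_real_derivative y2 s) (at s)" if "s \<in> I" for s
    using C2_D(2)[OF Cy that] unfolding y1_def y2_def .
  have Dt: "(th has_real_derivative t1 s) (at s)" if "s \<in> I" for s
    using C2_D(1)[OF Ct that] unfolding t1_def .
  have Dt1: "(t1 has_real_derivative t2 s) (at s)" if "s \<in> I" for s
    using C2_D(2)[OF Ct that] unfolding t1_def t2_def .
  have T: "2*y s*t1 s*y2 s - 2*y s*y1 s*t2 s + 2*y s^2*t1 s^3 - t1 s*y1 s^2 = 0" if "s \<in> I" for s
    using tr that N_eq[OF ypos[OF that] Ph[OF that]] unfolding N_inv_V_translator_def y1_def y2_def t1_def t2_def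
    by blast
  have Dpos: "y1 s^2 + 2*y s^2*t1 s^2 > 0" if "s \<in> I" for s
    using Ph[OF that] unfolding Phi_N_def y1_def t1_def by simp
  define K where "K s = t1 s^2 * y s / (y1 s^2 + 2*y s^2*t1 s^2)" for s
  have DK: "(K has_real_derivative 0) (at s)" if "s \<in> I" for s
  proof -
    have "(K has_real_derivative ((2*t1 s*t2 s*y s + t1 s^2*y1 s)*(y1 s^2+2*y s^2*t1 s^2)
          - t1 s^2*y s*(2*y1 s*y2 s + 4*y s*y1 s*t1 s^2 + 4*y s^2*t1 s*t2 s)) / (y1 s^2+2*y s^2*t1 s^2)^2) (at s)"
      unfolding K_def[abs_def]
      using Dpos[OF that]
      by (auto intro!: derivative_eq_intros Dy[OF that] Dy1[OF that] Dt[OF that] Dt1[OF that]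
               simp: algebra_simps power2_eq_square)
    then show ?thesis unfolding K_num T[OF that] by simp
  qed
  obtain k where k: "\<And>s. s \<in> I \<Longrightarrow> K s = k" using const_on[OF _ DK] C unfolding N_inv_curve_def by blast
  show ?thesis
  proof (cases "k = 0")
    case True
    have "t1 s = 0" if "s \<in> I" for s
      using k[OF that] True Dpos[OF that] ypos[OF that] unfolding K_def by simp
    then have "\<And>s. s \<in> I \<Longrightarrow> (th has_real_derivative 0) (at s)" using Dt by fastforce
    then have "\<exists>th0. \<forall>s\<in>I. th s = th0" using const_on C unfolding N_inv_curve_def by blast
    then show ?thesis ..
  next
    case False
    have t1nz: "t1 s \<noteq> 0" if "s \<in> I" for s
      using k[OF that] False unfolding K_def by auto
    define g where "g s = sqrt (y s)" for s
    define h where "h s = y1 s / (2 * g s * t1 s)" for s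
    define ph where "ph s = th s / sqrt 2" for s
    have gpos: "g s > 0" if "s \<in> I" for s using ypos[OF that] unfolding g_def by simp
    have gsq: "g s * g s = y s" if "s \<in> I" for s using ypos[OF that] unfolding g_def by simp
    have Dg: "(g has_real_derivative y1 s / (2 * g s)) (at s)" if "s \<in> I" for s
      unfolding g_def[abs_def] using ypos[OF that]
      by (auto intro!: derivative_eq_intros Dy[OF that] simp: field_simps)
    have Dph: "(ph has_real_derivative t1 s / sqrt 2) (at s)" if "s \<in> I" for s
      unfolding ph_def[abs_def]
      by (auto intro!: derivative_eq_intros Dt[OF that] simp: field_simps)
    have Dh: "(h has_real_derivative - g s * t1 s / 2) (at s)" if "s \<in> I" for s
    proof -
      have "(h has_real_derivative (y2 s * (2 * g s * t1 s) - y1 s * (2 * (y1 s / (2 * g s)) * t1 s + 2 * g s * t2 s))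
              / (2 * g s * t1 s)^2) (at s)"
        unfolding h_def[abs_def] using gpos[OF that] t1nz[OF that]
        by (auto intro!: derivative_eq_intros Dy1[OF that] Dg[OF that] Dt1[OF that] simp: algebra_simps power2_eq_square)
      moreover have "(y2 s * (2 * g s * t1 s) - y1 s * (2 * (y1 s / (2 * g s)) * t1 s + 2 * g s * t2 s))
              / (2 * g s * t1 s)^2 = - g s * t1 s / 2"
        by (rule h_alg[OF gpos[OF that] gsq[OF that] T[OF that] t1nz[OF that]])
      ultimately show ?thesis by simp
    qed
    define A where "A s = g s * cos (ph s) - sqrt 2 * h s * sin (ph s)" for s
    define B where "B s = g s * sin (ph s) + sqrt 2 * h s * cos (ph s)" for s
    have s2: "sqrt 2 * sqrt 2 = (2::real)" by simp
    have ht: "h s * t1 s = y1 s / (2 * g s)" if "s \<in> I" for s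
      unfolding h_def using t1nz[OF that] gpos[OF that] by (simp add: field_simps)
    have DA: "(A has_real_derivative 0) (at s)" if "s \<in> I" for s
    proof -
      have "(A has_real_derivative (y1 s / (2 * g s) * cos (ph s) - g s * (sin (ph s) * (t1 s / sqrt 2))
          - sqrt 2 * ((- g s * t1 s / 2) * sin (ph s) + h s * (cos (ph s) * (t1 s / sqrt 2))))) (at s)"
        unfolding A_def[abs_def]
        by (auto intro!: derivative_eq_intros Dg[OF that] Dh[OF that] Dph[OF that] simp: algebra_simps)
      moreover have "y1 s / (2 * g s) * cos (ph s) - g s * (sin (ph s) * (t1 s / sqrt 2))
          - sqrt 2 * ((- g s * t1 s / 2) * sin (ph s) + h s * (cos (ph s) * (t1 s / sqrt 2))) = 0"
        unfolding h_def using t1nz[OF that] gpos[OF that] by (simp add: field_simps s2)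
      ultimately show ?thesis by simp
    qed
    have DB: "(B has_real_derivative 0) (at s)" if "s \<in> I" for s
    proof -
      have "(B has_real_derivative (y1 s / (2 * g s) * sin (ph s) + g s * (cos (ph s) * (t1 s / sqrt 2))
          + sqrt 2 * ((- g s * t1 s / 2) * cos (ph s) - h s * (sin (ph s) * (t1 s / sqrt 2))))) (at s)"
        unfolding B_def[abs_def]
        by (auto intro!: derivative_eq_intros Dg[OF that] Dh[OF that] Dph[OF that] simp: algebra_simps)
      moreover have "y1 s / (2 * g s) * sin (ph s) + g s * (cos (ph s) * (t1 s / sqrt 2))
          + sqrt 2 * ((- g s * t1 s / 2) * cos (ph s) - h s * (sin (ph s) * (t1 s / sqrt 2))) = 0"
        unfolding h_def using t1nz[OF that] gpos[OF that] by (simp add: field_simps s2)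
      ultimately show ?thesis by simp
    qed
    obtain A0 where A0: "\<And>s. s \<in> I \<Longrightarrow> A s = A0" using const_on[OF _ DA] C unfolding N_inv_curve_def by blast
    obtain B0 where B0: "\<And>s. s \<in> I \<Longrightarrow> B s = B0" using const_on[OF _ DB] C unfolding N_inv_curve_def by blast
    have gAB: "g s = A0 * cos (ph s) + B0 * sin (ph s)" if "s \<in> I" for s
    proof -
      have "A s * cos (ph s) + B s * sin (ph s) = g s * ((sin (ph s))^2 + (cos (ph s))^2)"
        unfolding A_def B_def by (simp add: algebra_simps power2_eq_square del: sin_cos_squared_add sin_cos_squared_add2 sin_cos_squared_add3)
      then show ?thesis using A0[OF that] B0[OF that] by simp
    qed
    obtain s1 where s1: "s1 \<in> I" using ne by blast
    define p1 where "p1 = ph s1"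
    define Ap where "Ap = A0 * cos p1 + B0 * sin p1"
    define Bp where "Bp = B0 * cos p1 - A0 * sin p1"
    have Ap: "Ap > 0" using gAB[OF s1] gpos[OF s1] unfolding Ap_def p1_def by simp
    define be where "be = arctan (Bp / Ap)"
    define R where "R = Ap / cos be"
    define al where "al = p1 + be"
    have be: "- (pi/2) < be" "be < pi/2" unfolding be_def using arctan by auto
    have cbe: "cos be > 0" using be cos_gt_zero_pi by blast
    have Rpos: "R > 0" unfolding R_def using Ap cbe by simp
    have gR: "g s = R * cos (ph s - al)" if "s \<in> I" for s
    proof -
      have "g s = Ap * cos (ph s - p1) + Bp * sin (ph s - p1)"
        unfolding gAB[OF that] Ap_def Bp_def by (rule trig_shift)
      also have "\<dots> = R * cos (ph s - p1 - be)"
        unfolding R_def be_def by (rule trig_arctan[OF Ap])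
      finally show ?thesis unfolding al_def by (simp add: algebra_simps)
    qed
    define f where "f s = ph s - al" for s
    have fcont: "continuous_on I f"
      unfolding f_def
      by (intro continuous_at_imp_continuous_on ballI continuous_intros DERIV_isCont[OF Dph]) auto
    have fint: "is_interval (f ` I)"
      using connected_continuous_image[OF fcont cI] is_interval_connected_1 by blast
    have f1: "f s1 = - be" unfolding f_def al_def p1_def by simp
    have bound: "\<bar>f s\<bar> < pi/2" if sI: "s \<in> I" for s
    proof (rule ccontr)
      assume "\<not> \<bar>f s\<bar> < pi/2"
      then consider "f s \<ge> pi/2" | "f s \<le> - (pi/2)" by linarith
      then obtain z where z: "z \<in> f ` I" "cos z = 0"
      proof cases
        case 1
        have "pi/2 \<in> f ` I"
          by (rule mem_is_interval_1_I[OF fint imageI[OF s1] imageI[OF sI]]) (use 1 be f1 in auto)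
        then show ?thesis using that[of "pi/2"] by simp
      next
        case 2
        have "- (pi/2) \<in> f ` I"
          by (rule mem_is_interval_1_I[OF fint imageI[OF sI] imageI[OF s1]]) (use 2 be f1 in auto)
        then show ?thesis using that[of "- (pi/2)"] by simp
      qed
      then obtain s3 where s3: "s3 \<in> I" "cos (f s3) = 0" by blast
      then have "g s3 = 0" using gR[OF s3(1)] unfolding f_def by simp
      then show False using gpos[OF s3(1)] by simp
    qed
    have thph: "th s = sqrt 2 * ph s" for s unfolding ph_def by simp
    have "\<forall>s\<in>I. \<bar>th s - sqrt 2 * al\<bar> < pi / sqrt 2 \<and>
                              y s = R^2/2 * (1 + cos (sqrt 2 * (th s - sqrt 2 * al)))"
    proof
      fix s assume sI: "s \<in> I"
      have e1: "th s - sqrt 2 * al = sqrt 2 * f s" unfolding thph f_def by (simp add: algebra_simps)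
      have e2: "sqrt 2 * (th s - sqrt 2 * al) = 2 * f s" unfolding e1 by (simp add: mult.assoc[symmetric])
      have "\<bar>th s - sqrt 2 * al\<bar> = sqrt 2 * \<bar>f s\<bar>" unfolding e1 by (simp add: abs_mult)
      also have "\<dots> < sqrt 2 * (pi/2)" using bound[OF sI] by simp
      also have "sqrt 2 * (pi/2) = pi / sqrt 2" by (simp add: field_simps s2)
      finally have b: "\<bar>th s - sqrt 2 * al\<bar> < pi / sqrt 2" .
      have "y s = g s * g s" using gsq[OF sI] by simp
      also have "\<dots> = R^2/2 * (1 + cos (sqrt 2 * (th s - sqrt 2 * al)))"
        unfolding e2 cos_double_cos gR[OF sI] f_def by (simp add: power2_eq_square)
      finally show "\<bar>th s - sqrt 2 * al\<bar> < pi / sqrt 2 \<and>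
                              y s = R^2/2 * (1 + cos (sqrt 2 * (th s - sqrt 2 * al)))" using b by simp
    qed
    moreover have "R^2/2 > 0" using Rpos by simp
    ultimately show ?thesis by blast
  qed
qed


lemma T_alg:
  fixes c C S r t1 t2 y y1 y2 :: real
  assumes y: "y = c*(1+C)" and y1: "y1 = -c * S * (r * t1)"
    and y2: "y2 = -c * (C * (r * t1)) * (r * t1) - c * S * (r * t2)"
    and r: "r^2 = 2" and SC: "S^2 + C^2 = 1"
  shows "2*y*t1*y2 - 2*y*y1*t2 + 2*y^2*t1^3 - t1*y1^2 = 0"
proof -
  have "2*y*t1*y2 - 2*y*y1*t2 + 2*y^2*t1^3 - t1*y1^2
      = c^2*t1^3*(-2*(1+C)*C*r^2 + 2*(1+C)^2 - S^2*r^2)"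
    unfolding y y1 y2 by (simp add: power2_eq_square power3_eq_cube algebra_simps)
  also have "\<dots> = c^2*t1^3*(2*(1 - (S^2 + C^2)))" unfolding r by (simp add: power2_eq_square algebra_simps)
  also have "\<dots> = 0" using SC by simp
  finally show ?thesis .
qed

lemma part1_bwd:
  assumes C: "N_inv_curve I y th"
    and H: "(\<exists>th0. \<forall>s\<in>I. th s = th0) \<or>
          (\<exists>c>0. \<exists>s0. \<forall>s\<in>I. \<bar>th s - s0\<bar> < pi / sqrt 2 \<and>
                              y s = c * (1 + cos (sqrt 2 * (th s - s0))))"
  shows "N_inv_V_translator I y th"
proof -
  have oI: "open I" and Cy: "C2_on I y" and Ct: "C2_on I th"
    and ypos: "\<And>s. s \<in> I \<Longrightarrow> y s > 0"
    and Ph: "\<And>s. s \<in> I \<Longrightarrow> Phi_N (y s) (deriv y s) (deriv th s) > 0"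
    using C unfolding N_inv_curve_def open_interval_def by auto
  define y1 where "y1 = deriv y"
  define y2 where "y2 = deriv (deriv y)"
  define t1 where "t1 = deriv th"
  define t2 where "t2 = deriv (deriv th)"
  have Dt: "(th has_real_derivative t1 s) (at s)" if "s \<in> I" for s
    using C2_D(1)[OF Ct that] unfolding t1_def .
  have Dt1: "(t1 has_real_derivative t2 s) (at s)" if "s \<in> I" for s
    using C2_D(2)[OF Ct that] unfolding t1_def t2_def .
  have T: "2*y s*t1 s*y2 s - 2*y s*y1 s*t2 s + 2*y s^2*t1 s^3 - t1 s*y1 s^2 = 0" if sI: "s \<in> I" for s
  proof (cases "\<exists>th0. \<forall>s\<in>I. th s = th0")
    case True
    then obtain th0 where th0: "\<forall>s\<in>I. th s = th0" by blast
    have d1: "t1 s = 0" if "s \<in> I" for s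
      unfolding t1_def by (rule deriv_eqI[OF oI that, of _ "\<lambda>_. th0"]) (use th0 in auto)
    have d2: "t2 s = 0"
      unfolding t2_def by (rule deriv_eqI[OF oI sI, of _ "\<lambda>_. 0"]) (use d1 in \<open>auto simp: t1_def\<close>)
    show ?thesis using d1[OF sI] d2 by simp
  next
    case False
    then obtain c s0 where ys: "\<And>s. s \<in> I \<Longrightarrow> y s = c * (1 + cos (sqrt 2 * (th s - s0)))" using H by blast
    define u where "u s = sqrt 2 * (th s - s0)" for s
    have e1: "y1 s = -c * sin (u s) * (sqrt 2 * t1 s)" if "s \<in> I" for s
      unfolding y1_def
      by (rule deriv_eqI[OF oI that, of _ "\<lambda>s. c * (1 + cos (u s))"])
         (use ys in \<open>auto simp: u_def intro!: derivative_eq_intros Dt[OF that]\<close>)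
    have e2: "y2 s = -c * (cos (u s) * (sqrt 2 * t1 s)) * (sqrt 2 * t1 s) - c * sin (u s) * (sqrt 2 * t2 s)"
      unfolding y2_def
      by (rule deriv_eqI[OF oI sI, of _ "\<lambda>s. -c * sin (u s) * (sqrt 2 * t1 s)"])
         (use e1 in \<open>auto simp: u_def y1_def intro!: derivative_eq_intros Dt[OF sI] Dt1[OF sI]\<close>)
    show ?thesis
      by (rule T_alg[OF ys[OF sI, folded u_def] e1[OF sI] e2]) simp_all
  qed
  show ?thesis
    unfolding N_inv_V_translator_def
    using N_eq[OF ypos Ph] T unfolding y1_def y2_def t1_def t2_def by blast
qed


theorem mainTheorem3:
  shows
  "(\<forall>I y th. N_inv_curve I y th \<longrightarrow>
      (N_inv_V_translator I y th \<longleftrightarrow>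
         ((\<exists>th0. \<forall>s\<in>I. th s = th0) \<or>
          (\<exists>c>0. \<exists>s0. \<forall>s\<in>I. \<bar>th s - s0\<bar> < pi / sqrt 2 \<and>
                              y s = c * (1 + cos (sqrt 2 * (th s - s0)))))))
   \<and>
   (\<forall>I x th. A_inv_curve I x th \<longrightarrow>
      (A_inv_V_translator I x th \<longleftrightarrow>
         ((\<exists>th0. \<forall>s\<in>I. th s = th0) \<or> (\<forall>s\<in>I. x s = 0))))
   \<and>
   (\<forall>I x y phi. open_interval I \<longrightarrow>
      (\<forall>s\<in>I. x differentiable (at s) \<and> y differentiable (at s) \<and> phi differentiable (at s) \<and>
              y s > 0 \<and> deriv x s = 2 * y s * cos (phi s) \<and> deriv y s = 2 * y s * sin (phi s)) \<longrightarrow>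
      rot_V_translator I x y phi \<longrightarrow>
      (\<forall>s\<in>I. deriv phi s = - (y s * cos (phi s) + x s * sin (phi s)) / y s))"
proof (intro conjI allI impI)
  fix I y th assume C: "N_inv_curve I y th"
  show "N_inv_V_translator I y th \<longleftrightarrow>
         ((\<exists>th0. \<forall>s\<in>I. th s = th0) \<or>
          (\<exists>c>0. \<exists>s0. \<forall>s\<in>I. \<bar>th s - s0\<bar> < pi / sqrt 2 \<and>
                              y s = c * (1 + cos (sqrt 2 * (th s - s0)))))"
    using part1_fwd[OF C] part1_bwd[OF C] by blast
next
  fix I x th assume C: "A_inv_curve I x th"
  show "A_inv_V_translator I x th \<longleftrightarrow> ((\<exists>th0. \<forall>s\<in>I. th s = th0) \<or> (\<forall>s\<in>I. x s = 0))"
    by (rule part2[OF C])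
next
  fix I x y phi
  assume H: "\<forall>s\<in>I. x differentiable (at s) \<and> y differentiable (at s) \<and> phi differentiable (at s) \<and>
              y s > 0 \<and> deriv x s = 2 * y s * cos (phi s) \<and> deriv y s = 2 * y s * sin (phi s)"
    and R: "rot_V_translator I x y phi"
  show "\<forall>s\<in>I. deriv phi s = - (y s * cos (phi s) + x s * sin (phi s)) / y s"
    using part3[OF _ R] H by blast
qed

end
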